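(* Let $L$ be even, let $\mathcal{C}\in\mathsf{SCAC}(L,3)$ and let $\mathcal{I}=\{0,q_1,q_1+q_2\}\in\mathcal{C}$ with $q_1,q_2\ge 1$, $q_1+q_2<L$, and put $q_3=L-q_1-q_2$. Assume $q_1,q_2,q_3$ are pairwise distinct, and let $q_l<q_m<q_u$ be $q_1,q_2,q_3$ in increasing order, so that $d^*(\mathcal{I})=\{q_l,q_m,q_u,L-q_u,L-q_m,L-q_l\}$. If $q_u\ge L/2$, then (i) $|d^+(\mathcal{I})|=8$ if $q_m=q_l+1=(L+2)/4$ and $q_u=L/2$; and (ii) $|d^+(\mathcal{I})|\ge 10$ otherwise.
   Context: Identify $\mathbb{Z}_L$ with $\{0,1,\dots,L-1\}$; $\mathcal{P}(L,\omega)$ is the set of $\omega$-element subsets of $\mathbb{Z}_L$ (codewords). For $\mathcal{I}\in\mathcal{P}(L,\omega)$: $d(\mathcal{I})=\{a-b \bmod L: a,b\in\mathcal{I}\}$, $d^*(\mathcal{I})=d(\mathcal{I})\setminus\{0\}$, $d^+(\mathcal{I})=\{x+\epsilon \bmod L: x\in d^*(\mathcal{I}),\epsilon\in\{0,1\}\}$. A strongly conflict-avoiding code (SCAC) of length $L$ and weight $\omega$ is a set $\mathcal{C}=\{\mathcal{I}_1,\dots,\mathcal{I}_M\}\subseteq\mathcal{P}(L,\omega)$ such that for all $j\ne k$, $\big(d^*(\mathcal{I}_j)\cup(d^*(\mathcal{I}_j)+1)\cup(d^*(\mathcal{I}_j)-1)\big)\cap d(\mathcal{I}_k)=\emptyset$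 (shifts mod $L$); $\mathsf{SCAC}(L,\omega)$ is the class of all such codes. (Equivalently: $\{1,L-1\}\cap d^*(\mathcal{I}_j)=\emptyset$ for all $j$ and $d^+(\mathcal{I}_j)\cap d^+(\mathcal{I}_k)=\emptyset$ for $j\ne k$.) *)

theory Defs
  imports Main
begin

text \<open>Z_L is identified with {0..<L}; codewords are omega-element subsets.\<close>

definition codewords :: "nat \<Rightarrow> nat \<Rightarrow> nat set set" where
  "codewords L \<omega> = {I. I \<subseteq> {0..<L} \<and> card I = \<omega>}"

definition diffs :: "nat \<Rightarrow> nat set \<Rightarrow> nat set" where
  "diffs L I = {(a + L - b) mod L | a b. a \<in> I \<and> b \<in> I}"

definition dstar :: "nat \<Rightarrow> nat set \<Rightarrow> nat set" where
  "dstar L I = diffs L I - {0}"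

definition dplus :: "nat \<Rightarrow> nat set \<Rightarrow> nat set" where
  "dplus L I = {(x + e) mod L | x e. x \<in> dstar L I \<and> e \<in> {0, 1}}"

definition SCAC :: "nat \<Rightarrow> nat \<Rightarrow> nat set set set" where
  "SCAC L \<omega> = {C. C \<subseteq> codewords L \<omega> \<and>
      (\<forall>J\<in>C. {1 mod L, (L - 1) mod L} \<inter> dstar L J = {}) \<and>
      (\<forall>J\<in>C. \<forall>K\<in>C. J \<noteq> K \<longrightarrow> dplus L J \<inter> dplus L K = {})}"

end

theory Submission
  imports Defs
begin

lemma cA: "(a::nat) \<ge> 2 \<Longrightarrow> a < b \<Longrightarrow> 2*(a+b) < 2*k \<Longrightarrow> b \<noteq> a+1 \<Longrightarrow>
  card {a, a+1, b, b+1, a+b, a+b+1, 2*k-a-b, 2*k-a-b+1, 2*k-b, 2*k-b+1, 2*k-a, 2*k-a+1} = 12"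
proof -
  assume h: "(a::nat) \<ge> 2" "a < b" "2*(a+b) < 2*k" "b \<noteq> a+1"
  have "distinct [a, a+1, b, b+1, a+b, a+b+1, 2*k-a-b, 2*k-a-b+1, 2*k-b, 2*k-b+1, 2*k-a, 2*k-a+1]"
    using h apply simp by (intro conjI; arith)
  from distinct_card[OF this] show ?thesis by simp
qed

lemma cB: "(a::nat) \<ge> 2 \<Longrightarrow> b = a+1 \<Longrightarrow> 2*(a+b) < 2*k  \<Longrightarrow>
  card {a, a+1, b, b+1, a+b, a+b+1, 2*k-a-b, 2*k-a-b+1, 2*k-b, 2*k-b+1, 2*k-a, 2*k-a+1} = 10"
proof -
  assume h: "(a::nat) \<ge> 2" "b = a+1" "2*(a+b) < 2*k"
  have e: "{a, a+1, b, b+1, a+b, a+b+1, 2*k-a-b, 2*k-a-b+1, 2*k-b, 2*k-b+1, 2*k-a, 2*k-a+1}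
     = set [a, a+1, b+1, a+b, a+b+1, 2*k-a-b, 2*k-a-b+1, 2*k-b, 2*k-a, 2*k-a+1]"
    using h by auto
  have "distinct [a, a+1, b+1, a+b, a+b+1, 2*k-a-b, 2*k-a-b+1, 2*k-b, 2*k-a, 2*k-a+1]"
    using h apply simp by (intro conjI; arith)
  from distinct_card[OF this] show ?thesis unfolding e by simp
qed
lemma cC: "(a::nat) \<ge> 2 \<Longrightarrow> a < b \<Longrightarrow> 2*(a+b) = L \<Longrightarrow> b \<noteq> a+1 \<Longrightarrow>
  card {a, a+1, b, b+1, a+b, a+b+1, L-a-b, L-a-b+1, L-b, L-b+1, L-a, L-a+1} = 10"
proof -
  assume h: "(a::nat) \<ge> 2" "a < b" "2*(a+b) = L" "b \<noteq> a+1"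
  have e: "{a, a+1, b, b+1, a+b, a+b+1, L-a-b, L-a-b+1, L-b, L-b+1, L-a, L-a+1}
     = set [a, a+1, b, b+1, a+b, a+b+1, L-b, L-b+1, L-a, L-a+1]"
    using h by auto
  have "distinct [a, a+1, b, b+1, a+b, a+b+1, L-b, L-b+1, L-a, L-a+1]"
    using h apply simp by (intro conjI; arith)
  from distinct_card[OF this] show ?thesis unfolding e by simp
qed
lemma cD: "(a::nat) \<ge> 2 \<Longrightarrow> b = a+1 \<Longrightarrow> 2*(a+b) = L \<Longrightarrow>
  card {a, a+1, b, b+1, a+b, a+b+1, L-a-b, L-a-b+1, L-b, L-b+1, L-a, L-a+1} = 8"
proof -
  assume h: "(a::nat) \<ge> 2" "b = a+1" "2*(a+b) = L"
  have e: "{a, a+1, b, b+1, a+b, a+b+1, L-a-b, L-a-b+1, L-b, L-b+1, L-a, L-a+1}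
     = set [a, a+1, b+1, a+b, a+b+1, L-b, L-a, L-a+1]"
    using h by auto
  have "distinct [a, a+1, b+1, a+b, a+b+1, L-b, L-a, L-a+1]"
    using h apply simp by (intro conjI; arith)
  from distinct_card[OF this] show ?thesis unfolding e by simp
qed

lemma dplus_lit:
  fixes L q1 q2 q3 ql qm qu :: nat and C :: "nat set set"
  assumes "even L"
    and "C \<in> SCAC L 3"
    and "{0, q1, q1 + q2} \<in> C"
    and "q1 \<ge> 1" and "q2 \<ge> 1" and "q1 + q2 < L"
    and "q3 = L - q1 - q2"
    and "q1 \<noteq> q2" and "q1 \<noteq> q3" and "q2 \<noteq> q3"
    and "{ql, qm, qu} = {q1, q2, q3}" and "ql < qm" and "qm < qu"
  shows "ql \<ge> 2 \<and> qu = L - ql - qm \<and> ql + qm < L \<and> dplus L {0, q1, q1 + q2} =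
     {ql, ql+1, qm, qm+1, ql+qm, ql+qm+1, L-ql-qm, L-ql-qm+1, L-qm, L-qm+1, L-ql, L-ql+1}"
proof -
  let ?I = "{0, q1, q1 + q2}"
  have sumq: "ql + qm + qu = L"
  proof -
    have "\<Sum>{ql, qm, qu} = ql + qm + qu" using assms(12,13) by simp
    moreover have "\<Sum>{q1, q2, q3} = q1 + q2 + q3" using assms(8,9,10) by simp
    ultimately show ?thesis using assms(11,7,6) by simp
  qed
  have m1: "(q1 + L - 0) mod L = q1" "(q1+q2 + L - 0) mod L = q1+q2"
    "(0 + L - q1) mod L = L - q1" "(0 + L - (q1+q2)) mod L = L - (q1+q2)"
    "(q1 + L - (q1+q2)) mod L = L - q2" "(q1 + q2 + L - q1) mod L = q2"
    "(x + L - x) mod L = 0" for x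
    using assms(4,5,6) by auto
  have dif: "diffs L ?I = {0, q1, q1+q2, L-q1, L-(q1+q2), L-q2, q2}"
    unfolding diffs_def
    apply (rule set_eqI)
    apply (simp only: mem_Collect_eq insert_iff empty_iff)
    apply (rule iffI)
     apply (elim exE conjE disjE; simp only: m1; simp)
    apply (elim disjE)
    using m1 by metis+
  have DS: "dstar L ?I = {ql, qm, qu, L-ql, L-qm, L-qu}"
  proof -
    have "dstar L ?I = {q1, q2, q3} \<union> (\<lambda>x. L - x) ` {q1, q2, q3}"
      unfolding dstar_def dif using assms(4,5,6,7) by auto
    then show ?thesis unfolding assms(11)[symmetric] by auto
  qed
  have scac: "{1 mod L, (L - 1) mod L} \<inter> dstar L ?I = {}"
    using assms(2,3) unfolding SCAC_def by blast
  have L1: "1 mod L = 1" "(L-1) mod L = L - 1" using assms(4,5,6) by auto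
  have n1: "1 \<notin> dstar L ?I" "L - 1 \<notin> dstar L ?I" using scac L1 by auto
  have "ql \<in> {q1, q2, q3}" using assms(11) by blast
  then have qlpos: "ql \<ge> 1" using assms(4,5,6,7) by auto
  have ql2: "ql \<ge> 2" using n1(1) qlpos unfolding DS by (cases "ql = 1") auto
  have D2: "dstar L ?I = {ql, qm, L-ql-qm, L-ql, L-qm, ql+qm}" unfolding DS using sumq by auto
  have lt: "x + 1 < L" if "x \<in> dstar L ?I" for x
  proof -
    have "x = ql \<or> x = qm \<or> x = L-ql-qm \<or> x = L-ql \<or> x = L-qm \<or> x = ql+qm" using that unfolding D2 by simp
    then have "x < L" using sumq ql2 assms(12,13) by (elim disjE) arith+
    moreover have "x \<noteq> L - 1" using that n1(2) by blast
    ultimately have "x < L" "x \<noteq> L - 1" by auto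
    then show ?thesis by arith
  qed
  have "dplus L ?I = {y. \<exists>x \<in> dstar L ?I. y = x \<or> y = x + 1}"
    unfolding dplus_def
  proof (rule set_eqI, rule iffI)
    fix y assume "y \<in> {(x + e) mod L |x e. x \<in> dstar L ?I \<and> e \<in> {0, 1}}"
    then obtain x e where "y = (x+e) mod L" "x \<in> dstar L ?I" "e \<in> {0,1}" by blast
    then show "y \<in> {y. \<exists>x \<in> dstar L ?I. y = x \<or> y = x + 1}" using lt[of x] by auto
  next
    fix y assume "y \<in> {y. \<exists>x \<in> dstar L ?I. y = x \<or> y = x + 1}"
    then obtain x where x: "x \<in> dstar L ?I" "y = x \<or> y = x + 1" by blast
    then have "y = (x + (if y = x then 0 else 1)) mod L" using lt[of x] by auto
    then show "y \<in> {(x + e) mod L |x e. x \<in> dstar L ?I \<and> e \<in> {0, 1}}" using x by force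
  qed
  also have "\<dots> = {ql, ql+1, qm, qm+1, ql+qm, ql+qm+1, L-ql-qm, L-ql-qm+1, L-qm, L-qm+1, L-ql, L-ql+1}"
    unfolding D2 by blast
  finally have "dplus L ?I = {ql, ql+1, qm, qm+1, ql+qm, ql+qm+1, L-ql-qm, L-ql-qm+1, L-qm, L-qm+1, L-ql, L-ql+1}" .
  moreover have "qu = L - ql - qm" "ql + qm < L" using sumq assms(12,13) by arith+
  ultimately show ?thesis using ql2 by blast
qed

theorem mainTheorem2:
  fixes L q1 q2 q3 ql qm qu :: nat and C :: "nat set set"
  assumes "even L"
    and "C \<in> SCAC L 3"
    and "{0, q1, q1 + q2} \<in> C"
    and "q1 \<ge> 1" and "q2 \<ge> 1" and "q1 + q2 < L"
    and "q3 = L - q1 - q2"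
    and "q1 \<noteq> q2" and "q1 \<noteq> q3" and "q2 \<noteq> q3"
    and "{ql, qm, qu} = {q1, q2, q3}" and "ql < qm" and "qm < qu"
    and "2 * qu \<ge> L"
  shows "(qm = ql + 1 \<and> 4 * qm = L + 2 \<and> 2 * qu = L \<longrightarrow> card (dplus L {0, q1, q1 + q2}) = 8)
       \<and> (\<not> (qm = ql + 1 \<and> 4 * qm = L + 2 \<and> 2 * qu = L) \<longrightarrow> card (dplus L {0, q1, q1 + q2}) \<ge> 10)"
proof -
  have F: "ql \<ge> 2 \<and> qu = L - ql - qm \<and> ql + qm < L \<and> dplus L {0, q1, q1 + q2} =
     {ql, ql+1, qm, qm+1, ql+qm, ql+qm+1, L-ql-qm, L-ql-qm+1, L-qm, L-qm+1, L-ql, L-ql+1}"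
    by (rule dplus_lit[OF assms(1-13)])
  then have ql2: "ql \<ge> 2" and qu: "qu = L - ql - qm" and lt: "ql + qm < L"
    and DP: "dplus L {0, q1, q1 + q2} =
     {ql, ql+1, qm, qm+1, ql+qm, ql+qm+1, L-ql-qm, L-ql-qm+1, L-qm, L-qm+1, L-ql, L-ql+1}" by auto
  obtain k where k: "L = 2*k" using assms(1) by blast
  have le: "2*(ql+qm) \<le> L" using assms(14) qu lt by arith
  show ?thesis
  proof (cases "2*(ql+qm) = L")
    case True
    have q2: "2 * qu = L" using True qu by arith
    show ?thesis
    proof (cases "qm = ql + 1")
      case c: True
      have "card (dplus L {0, q1, q1 + q2}) = 8" unfolding DP by (rule cD[OF ql2 c True])
      moreover have "4 * qm = L + 2" using c True by arith
      ultimately show ?thesis using c q2 by simp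
    next
      case c: False
      have "card (dplus L {0, q1, q1 + q2}) = 10" unfolding DP by (rule cC[OF ql2 assms(12) True c])
      then show ?thesis using c by simp
    qed
  next
    case False
    then have lt2: "2*(ql+qm) < 2*k" using le k by simp
    have nc: "\<not> 2 * qu = L" using False qu lt by arith
    show ?thesis
    proof (cases "qm = ql + 1")
      case c: True
      have "card (dplus L {0, q1, q1 + q2}) = 10" unfolding DP unfolding k by (rule cB[OF ql2 c lt2])
      then show ?thesis using nc by simp
    next
      case c: False
      have "card (dplus L {0, q1, q1 + q2}) = 12" unfolding DP unfolding k by (rule cA[OF ql2 assms(12) lt2 c])
      then show ?thesis using nc by simp
    qed
  qed
qed

end
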